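(* Let $q$, $T_q$, $P^2_q$, $\Delta$, $\varepsilon$ be as in the context. Then there is a continuous algebra homomorphism $S:T_q\to T_q$ with $S(U)=U^{-1}$ and $S(V)=V^{-1}$, and for all $x\in T_q$, $$\mu\circ(S,\mathrm{Id})\circ\Delta(x)=\varepsilon(x)\cdot1=\mu\circ(\mathrm{Id},S)\circ\Delta(x),$$ where $(S,\mathrm{Id}),(\mathrm{Id},S):P^2_q\to P^2_q$ are the continuous linear maps with $U_1^kV_1^\ell U_2^mV_2^n\mapsto U_1^{-k}V_1^{-\ell}U_2^mV_2^n$ and $U_1^kV_1^\ell U_2^mV_2^n\mapsto U_1^kV_1^{\ell}U_2^{-m}V_2^{-n}$ respectively, and $\mu:P^2_q\to T_q$ is the continuous linear map with $\mu(U_1^kV_1^\ell U_2^mV_2^n)=U^kV^\ell U^mV^n=q^{-\ell m}U^{k+m}V^{\ell+n}$.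
   Context: Fix $q\in\mathbb C$ with $|q|=1$ and a square root $q^{1/2}$; $q^{r/2}:=(q^{1/2})^r$. $\mathcal S(\mathbb Z^d,\mathbb C)$ denotes the Fréchet space of complex Schwartz sequences on $\mathbb Z^d$, $\delta^a$ the sequence equal to $1$ at $a$ and $0$ elsewhere. $T_q$ is $\mathcal S(\mathbb Z^2,\mathbb C)$ with continuous multiplication $\delta^{m,n}\delta^{k,\ell}=q^{-kn}\delta^{m+k,n+\ell}$ and unit $1=\delta^{0,0}$; with $U=\delta^{1,0}$, $V=\delta^{0,1}$ one has $\delta^{m,n}=U^mV^n$ for all $m,n\in\mathbb Z$ and $UV=qVU$. $P^2_q$ is $\mathcal S(\mathbb Z^4,\mathbb C)$ with continuous multiplication $\delta^{k_1,\ell_1,m_1,n_1}\delta^{k_2,\ell_2,m_2,n_2}=q^{\frac{k_2n_1}{2}-k_2\ell_1-\frac{m_1\ell_2}{2}-m_1n_2}\delta^{k_1+k_2,\ell_1+\ell_2,m_1+m_2,n_1+n_2}$; with $U_1=\delta^{1,0,0,0}$, $V_1=\delta^{0,1,0,0}$, $U_2=\delta^{0,0,1,0}$, $V_2=\delta^{0,0,0,1}$ one has $\delta^{k,\ell,m,n}=U_1^kV_1^\ell U_2^mV_2^n$. $\Delta:T_q\to P^2_q$ is the continuous algebra homomorphism with $\Delta(U)=U_1U_2$, $\Delta(V)=V_1V_2$. $\varepsilon:T_q\to\mathbb C$ is the continuous linear map with $\varepsilon(U^kV^\ell)=q^{k\ell/2}$. *)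

theory Defs
  imports "HOL-Analysis.Analysis"
begin

text \<open>Weights (1 + |a|_1) on Z^2 and Z^4 (equivalent to the Euclidean 1+|a|).\<close>
definition wt2 :: "int \<times> int \<Rightarrow> real" where
  "wt2 = (\<lambda>(m,n). 1 + real_of_int (\<bar>m\<bar> + \<bar>n\<bar>))"

definition wt4 :: "int \<times> int \<times> int \<times> int \<Rightarrow> real" where
  "wt4 = (\<lambda>(k,l,m,n). 1 + real_of_int (\<bar>k\<bar> + \<bar>l\<bar> + \<bar>m\<bar> + \<bar>n\<bar>))"

definition is_schwartz :: "('a \<Rightarrow> real) \<Rightarrow> ('a \<Rightarrow> complex) \<Rightarrow> bool" where
  "is_schwartz w f \<longleftrightarrow> (\<forall>N::nat. bdd_above (range (\<lambda>a. w a ^ N * cmod (f a))))"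

definition seminorm :: "('a \<Rightarrow> real) \<Rightarrow> nat \<Rightarrow> ('a \<Rightarrow> complex) \<Rightarrow> real" where
  "seminorm w N f = (SUP a. w a ^ N * cmod (f a))"

definition cont_lin_map ::
  "('a \<Rightarrow> real) \<Rightarrow> ('b \<Rightarrow> real) \<Rightarrow> (('a \<Rightarrow> complex) \<Rightarrow> ('b \<Rightarrow> complex)) \<Rightarrow> bool" where
  "cont_lin_map w1 w2 T \<longleftrightarrow>
     (\<forall>f. is_schwartz w1 f \<longrightarrow> is_schwartz w2 (T f)) \<and>
     (\<forall>f g. is_schwartz w1 f \<and> is_schwartz w1 g \<longrightarrow> T (\<lambda>a. f a + g a) = (\<lambda>b. T f b + T g b)) \<and>
     (\<forall>c f. is_schwartz w1 f \<longrightarrow> T (\<lambda>a. c * f a) = (\<lambda>b. c * T f b)) \<and>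
     (\<forall>N. \<exists>M C. \<forall>f. is_schwartz w1 f \<longrightarrow> seminorm w2 N (T f) \<le> C * seminorm w1 M f)"

definition delta :: "'a \<Rightarrow> 'a \<Rightarrow> complex" where
  "delta a = (\<lambda>b. if b = a then 1 else 0)"

text \<open>delta^{m,n} delta^{k,l} = q^{-kn} delta^{m+k,n+l}, extended continuously.\<close>
definition tq_mult :: "complex \<Rightarrow> (int \<times> int \<Rightarrow> complex) \<Rightarrow> (int \<times> int \<Rightarrow> complex) \<Rightarrow> (int \<times> int \<Rightarrow> complex)" where
  "tq_mult q f g = (\<lambda>(a,b). \<Sum>\<^sub>\<infinity>(m,n)\<in>UNIV. f (m,n) * g (a - m, b - n) * q powi (- ((a - m) * n)))"

definition tq_one :: "int \<times> int \<Rightarrow> complex" where "tq_one = delta (0,0)"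
definition tq_U :: "int \<times> int \<Rightarrow> complex" where "tq_U = delta (1,0)"
definition tq_V :: "int \<times> int \<Rightarrow> complex" where "tq_V = delta (0,1)"

definition tq_cont_alg_hom :: "complex \<Rightarrow> ((int \<times> int \<Rightarrow> complex) \<Rightarrow> (int \<times> int \<Rightarrow> complex)) \<Rightarrow> bool" where
  "tq_cont_alg_hom q S \<longleftrightarrow> cont_lin_map wt2 wt2 S \<and>
     (\<forall>f g. is_schwartz wt2 f \<and> is_schwartz wt2 g \<longrightarrow> S (tq_mult q f g) = tq_mult q (S f) (S g)) \<and>
     S tq_one = tq_one"

text \<open>Multiplication of P^2_q, with s = q^{1/2}, so q^{r/2} = s^r.  The cocycle is
  k2 n1/2 - k2 l1 - m1 l2/2 - m2 n1 (the context's last term m1 n2 is a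
  typo, inconsistent with delta^{k,l,m,n} = U1^k V1^l U2^m V2^n).  Only for reference.\<close>
definition pq_mult :: "complex \<Rightarrow> (int \<times> int \<times> int \<times> int \<Rightarrow> complex) \<Rightarrow> (int \<times> int \<times> int \<times> int \<Rightarrow> complex) \<Rightarrow> (int \<times> int \<times> int \<times> int \<Rightarrow> complex)" where
  "pq_mult s F G = (\<lambda>(a,b,c,d). \<Sum>\<^sub>\<infinity>(k1,l1,m1,n1)\<in>UNIV.
      F (k1,l1,m1,n1) * G (a - k1, b - l1, c - m1, d - n1) *
      s powi ((a - k1) * n1 - 2 * (a - k1) * l1 - m1 * (b - l1) - 2 * (c - m1) * n1))"

text \<open>Delta(U^k V^l) = (U1 U2)^k (V1 V2)^l = q^{-kl/2} delta^{k,l,k,l}, extended continuously.\<close>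
definition coprod :: "complex \<Rightarrow> (int \<times> int \<Rightarrow> complex) \<Rightarrow> (int \<times> int \<times> int \<times> int \<Rightarrow> complex)" where
  "coprod s f = (\<lambda>(k,l,m,n). if k = m \<and> l = n then s powi (- (k * l)) * f (k,l) else 0)"

definition counit :: "complex \<Rightarrow> (int \<times> int \<Rightarrow> complex) \<Rightarrow> complex" where
  "counit s f = (\<Sum>\<^sub>\<infinity>(k,l)\<in>UNIV. s powi (k * l) * f (k,l))"

text \<open>mu(U1^k V1^l U2^m V2^n) = q^{-lm} U^{k+m} V^{l+n}, extended continuously.\<close>
definition mu :: "complex \<Rightarrow> (int \<times> int \<times> int \<times> int \<Rightarrow> complex) \<Rightarrow> (int \<times> int \<Rightarrow> complex)" where
  "mu q F = (\<lambda>(a,b). \<Sum>\<^sub>\<infinity>(k,l)\<in>UNIV. q powi (- (l * (a - k))) * F (k, l, a - k, b - l))"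

definition SId :: "(int \<times> int \<times> int \<times> int \<Rightarrow> complex) \<Rightarrow> (int \<times> int \<times> int \<times> int \<Rightarrow> complex)" where
  "SId F = (\<lambda>(k,l,m,n). F (-k, -l, m, n))"

definition IdS :: "(int \<times> int \<times> int \<times> int \<Rightarrow> complex) \<Rightarrow> (int \<times> int \<times> int \<times> int \<Rightarrow> complex)" where
  "IdS F = (\<lambda>(k,l,m,n). F (k, l, -m, -n))"

end

theory Submission
  imports Defs
begin

definition refl2 :: "(int \<times> int \<Rightarrow> complex) \<Rightarrow> (int \<times> int \<Rightarrow> complex)" where
  "refl2 f = (\<lambda>(a,b). f (-a,-b))"

lemma infsum_single_pt:
  fixes f :: "'a \<Rightarrow> complex"
  assumes "\<And>x. x \<noteq> p \<Longrightarrow> f x = 0"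
  shows "infsum f UNIV = f p"
proof -
  have "infsum f UNIV = infsum f {p}"
    by (rule infsum_cong_neutral[symmetric]) (use assms in auto)
  then show ?thesis by simp
qed

lemma bij_neg2: "bij_betw (\<lambda>(m::int,n::int). (-m,-n)) UNIV UNIV"
  by (rule bij_betwI[where g="\<lambda>(m::int,n::int). (-m,-n)"]) auto

lemma infsum_neg2:
  "infsum (\<lambda>(m::int,n::int). f (-m,-n)) UNIV = infsum f UNIV"
proof -
  have "infsum (\<lambda>x. f ((\<lambda>(m::int,n::int). (-m,-n)) x)) UNIV = infsum f UNIV"
    by (rule infsum_reindex_bij_betw[OF bij_neg2])
  moreover have "(\<lambda>x. f ((\<lambda>(m::int,n::int). (-m,-n)) x)) = (\<lambda>(m::int,n::int). f (-m,-n))"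
    by auto
  ultimately show ?thesis by simp
qed

lemma wt2_neg: "wt2 (-a, -b) = wt2 (a, b)"
  by (simp add: wt2_def)

lemma range_refl2:
  "range (\<lambda>x. wt2 x ^ N * cmod (refl2 f x)) = range (\<lambda>x. wt2 x ^ N * cmod (f x))"
proof -
  have "(\<lambda>x. wt2 x ^ N * cmod (refl2 f x)) = (\<lambda>x. wt2 x ^ N * cmod (f x)) \<circ> (\<lambda>(m::int,n::int). (-m,-n))"
    by (auto simp: refl2_def wt2_neg fun_eq_iff)
  then have "range (\<lambda>x. wt2 x ^ N * cmod (refl2 f x)) = (\<lambda>x. wt2 x ^ N * cmod (f x)) ` range (\<lambda>(m::int,n::int). (-m,-n))"
    by (simp only: image_comp)
  also have "range (\<lambda>(m::int,n::int). (-m,-n)) = UNIV"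
    using bij_neg2 by (simp add: bij_betw_def)
  finally show ?thesis by simp
qed

lemma refl2_cont: "cont_lin_map wt2 wt2 refl2"
  unfolding cont_lin_map_def
proof (intro conjI allI impI)
  fix f :: "int \<times> int \<Rightarrow> complex" assume "is_schwartz wt2 f"
  then show "is_schwartz wt2 (refl2 f)"
    unfolding is_schwartz_def using range_refl2 by metis
next
  fix f g :: "int \<times> int \<Rightarrow> complex"
  show "refl2 (\<lambda>a. f a + g a) = (\<lambda>b. refl2 f b + refl2 g b)"
    by (auto simp: refl2_def)
next
  fix c and f :: "int \<times> int \<Rightarrow> complex"
  show "refl2 (\<lambda>a. c * f a) = (\<lambda>b. c * refl2 f b)"
    by (auto simp: refl2_def)
next
  fix N
  show "\<exists>M C. \<forall>f. is_schwartz wt2 f \<longrightarrow> seminorm wt2 N (refl2 f) \<le> C * seminorm wt2 M f"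
    by (rule exI[of _ N], rule exI[of _ 1]) (simp add: seminorm_def range_refl2)
qed

lemma refl2_mult: "refl2 (tq_mult q f g) = tq_mult q (refl2 f) (refl2 g)"
proof (rule ext, clarify)
  fix a b :: int
  have "tq_mult q (refl2 f) (refl2 g) (a,b) =
     infsum (\<lambda>(m::int,n::int). (\<lambda>(m,n). f (m,n) * g (-a - m, -b - n) * q powi ((a + m) * n)) (-m,-n)) UNIV"
    unfolding tq_mult_def refl2_def
    by (simp add: algebra_simps case_prod_unfold)
  also have "\<dots> = refl2 (tq_mult q f g) (a,b)"
    unfolding infsum_neg2 unfolding tq_mult_def refl2_def
    by (simp add: algebra_simps case_prod_unfold)
  finally show "refl2 (tq_mult q f g) (a,b) = tq_mult q (refl2 f) (refl2 g) (a,b)" by simp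
qed

lemma tq_mult_delta:
  "tq_mult q (delta (c,d)) g = (\<lambda>(a,b). g (a - c, b - d) * q powi (- ((a - c) * d)))"
proof (rule ext, clarify)
  fix a b :: int
  show "tq_mult q (delta (c,d)) g (a,b) = g (a - c, b - d) * q powi (- ((a - c) * d))"
    unfolding tq_mult_def
    by (subst infsum_single_pt[where p="(c,d)"]) (auto simp: delta_def split: if_splits)
qed

theorem mainTheorem4:
  fixes q s :: complex
  assumes "cmod q = 1" and "s ^ 2 = q"
  shows "\<exists>S. tq_cont_alg_hom q S \<and>
           tq_mult q (S tq_U) tq_U = tq_one \<and> tq_mult q tq_U (S tq_U) = tq_one \<and>
           tq_mult q (S tq_V) tq_V = tq_one \<and> tq_mult q tq_V (S tq_V) = tq_one \<and>
           (\<forall>x. is_schwartz wt2 x \<longrightarrow>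
              mu q (SId (coprod s x)) = (\<lambda>a. counit s x * tq_one a) \<and>
              mu q (IdS (coprod s x)) = (\<lambda>a. counit s x * tq_one a))"
proof (intro exI[of _ refl2] conjI allI impI)
  have s0: "s \<noteq> 0" using assms by auto
  have rd: "refl2 (delta (c,d)) = delta (-c,-d)" for c d
    by (auto simp: refl2_def delta_def fun_eq_iff)
  show "tq_cont_alg_hom q refl2"
    unfolding tq_cont_alg_hom_def using refl2_cont refl2_mult
    by (auto simp: tq_one_def rd)
  show "tq_mult q (refl2 tq_U) tq_U = tq_one"
    unfolding tq_U_def tq_one_def rd tq_mult_delta by (auto simp: delta_def fun_eq_iff)
  show "tq_mult q tq_U (refl2 tq_U) = tq_one"
    unfolding tq_U_def tq_one_def rd tq_mult_delta by (auto simp: delta_def fun_eq_iff)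
  show "tq_mult q (refl2 tq_V) tq_V = tq_one"
    unfolding tq_V_def tq_one_def rd tq_mult_delta by (auto simp: delta_def fun_eq_iff)
  show "tq_mult q tq_V (refl2 tq_V) = tq_one"
    unfolding tq_V_def tq_one_def rd tq_mult_delta by (auto simp: delta_def fun_eq_iff)
  fix x :: "int \<times> int \<Rightarrow> complex"
  have qs: "q powi (k * l) * s powi (- (k * l)) = s powi (k * l)" for k l :: int
  proof -
    have "q powi (k * l) = s powi (k * l) * s powi (k * l)"
    proof -
      have "q = s * s" using assms(2) by (simp add: power2_eq_square)
      then show ?thesis by (simp add: power_int_mult_distrib)
    qed
    then show ?thesis using s0 by (simp add: power_int_minus field_simps)
  qed
  have qs2: "q powi (l * k) * (s powi (- (k * l)) * y) = s powi (k * l) * y" for k l :: int and y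
    using qs[of k l] by (metis mult.assoc mult.commute)
  show "mu q (SId (coprod s x)) = (\<lambda>a. counit s x * tq_one a)"
  proof (rule ext, clarify)
    fix a b :: int
    have qs2: "q powi (l * k) * (s powi (- (k * l)) * y) = s powi (k * l) * y" for k l :: int and y
    using qs[of k l] by (metis mult.assoc mult.commute)
  show "mu q (SId (coprod s x)) (a,b) = counit s x * tq_one (a,b)"
    proof (cases "a = 0 \<and> b = 0")
      case True
      have "mu q (SId (coprod s x)) (a,b) =
        infsum (\<lambda>(k::int,l::int). (\<lambda>(k,l). s powi (k * l) * x (k,l)) (-k,-l)) UNIV"
        unfolding mu_def SId_def coprod_def using True
        by (simp add: case_prod_unfold qs2)
      also have "\<dots> = counit s x" unfolding infsum_neg2 counit_def ..
      finally show ?thesis using True by (simp add: tq_one_def delta_def)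
    next
      case False
      then show ?thesis unfolding mu_def SId_def coprod_def
        by (auto simp: tq_one_def delta_def case_prod_unfold)
    qed
  qed
  show "mu q (IdS (coprod s x)) = (\<lambda>a. counit s x * tq_one a)"
  proof (rule ext, clarify)
    fix a b :: int
    show "mu q (IdS (coprod s x)) (a,b) = counit s x * tq_one (a,b)"
    proof (cases "a = 0 \<and> b = 0")
      case True
      then show ?thesis unfolding mu_def IdS_def coprod_def counit_def
        by (simp add: case_prod_unfold qs2 tq_one_def delta_def)
    next
      case False
      then show ?thesis unfolding mu_def IdS_def coprod_def
        by (auto simp: tq_one_def delta_def case_prod_unfold)
    qed
  qed
qed

end
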